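(* For every $v\in\mathbb{C}^n$, the element $g=(\mathrm{J}(1,n),v)\in\mathrm{Aff}(n,\mathbb{C})$ is strongly $c$-reversible.
   Context: $\mathrm{J}(1,n)$ denotes the $n\times n$ Jordan block with $1$ on the diagonal and on the superdiagonal and $0$ elsewhere. $\mathrm{Aff}(n,\mathbb{C})$ is the group of affine maps $z\mapsto Az+v$, written $(A,v)$, with product $(A,v)(B,w)=(AB,Aw+v)$ and identity $e=(I_n,0)$. For $g=(A,v)$ set $\overline{g}=(\overline{A},\overline{v})$. An element $h$ is a coninvolution if $h\overline{h}=e$; $g$ is strongly $c$-reversible if there is a coninvolution $h$ with $hgh^{-1}=\overline{g}^{-1}$. *)

theory Defs
  imports "Jordan_Normal_Form.Jordan_Normal_Form"
begin

text \<open>Elements of Aff(n,C) are pairs (A,v) with A an invertible n x n complex matrix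
  and v a complex vector of dimension n; they act as z maps to A z + v.\<close>

type_synonym aff = "complex mat \<times> complex vec"

definition Aff :: "nat \<Rightarrow> aff set" where
  "Aff n = {(A, v). A \<in> carrier_mat n n \<and> invertible_mat A \<and> v \<in> carrier_vec n}"

definition aff_mult :: "aff \<Rightarrow> aff \<Rightarrow> aff" where
  "aff_mult g h = (case g of (A, v) \<Rightarrow> case h of (B, w) \<Rightarrow> (A * B, A *\<^sub>v w + v))"

definition aff_one :: "nat \<Rightarrow> aff" where
  "aff_one n = (1\<^sub>m n, 0\<^sub>v n)"

definition aff_inv :: "nat \<Rightarrow> aff \<Rightarrow> aff" where
  "aff_inv n g = (THE k. k \<in> Aff n \<and> aff_mult g k = aff_one n \<and> aff_mult k g = aff_one n)"

definition aff_cnj :: "aff \<Rightarrow> aff" where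
  "aff_cnj g = (case g of (A, v) \<Rightarrow> (map_mat cnj A, map_vec cnj v))"

definition coninvolution :: "nat \<Rightarrow> aff \<Rightarrow> bool" where
  "coninvolution n h \<longleftrightarrow> h \<in> Aff n \<and> aff_mult h (aff_cnj h) = aff_one n"

definition strongly_c_reversible :: "nat \<Rightarrow> aff \<Rightarrow> bool" where
  "strongly_c_reversible n g \<longleftrightarrow>
     (\<exists>h. coninvolution n h \<and>
          aff_mult (aff_mult h g) (aff_inv n h) = aff_inv n (aff_cnj g))"

end

theory Submission
  imports Defs
begin

lemma alt_choose:
  "(\<Sum>k\<le>m. (-1)^k * of_nat (m choose k) * of_nat (k choose i)) = (if m = i then (-1)^m else (0::'a::comm_ring_1))"
proof (cases "i \<le> m")
  case False
  then show ?thesis by (auto intro!: sum.neutral simp: binomial_eq_0)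
next
  case True
  have "(\<Sum>k\<le>m. (-1)^k * of_nat (m choose k) * of_nat (k choose i) :: 'a) =
        (\<Sum>k\<in>{i..m}. (-1)^k * of_nat (m choose k) * of_nat (k choose i))"
    by (rule sum.mono_neutral_right) (auto simp: not_le binomial_eq_0)
  also have "\<dots> = (\<Sum>l\<in>{0..m-i}. (-1)^(l+i) * of_nat (m choose (l+i)) * of_nat ((l+i) choose i))"
    using sum.shift_bounds_cl_nat_ivl[of "\<lambda>k. (-1)^k * of_nat (m choose k) * of_nat (k choose i) :: 'a" 0 i "m-i"] True
    by simp
  also have "\<dots> = (\<Sum>l\<in>{0..m-i}. (-1)^i * of_nat (m choose i) * ((-1)^l * of_nat ((m-i) choose l)))"
  proof (rule sum.cong)
    fix l assume "l \<in> {0..m-i}"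
    hence "(m choose (l+i)) * ((l+i) choose i) = (m choose i) * ((m-i) choose l)"
      using choose_mult[of i "l+i" m] True by auto
    hence "(of_nat (m choose (l+i)) * of_nat ((l+i) choose i) :: 'a) = of_nat (m choose i) * of_nat ((m-i) choose l)"
      by (metis of_nat_mult)
    thus "(-1)^(l+i) * of_nat (m choose (l+i)) * of_nat ((l+i) choose i) = (-1)^i * of_nat (m choose i) * ((-1)^l * (of_nat ((m-i) choose l) :: 'a))"
      by (simp add: power_add algebra_simps)
  qed simp
  also have "\<dots> = (-1)^i * of_nat (m choose i) * (\<Sum>l\<le>m-i. (-1)^l * of_nat ((m-i) choose l))"
    by (simp add: sum_distrib_left atLeast0AtMost)
  also have "\<dots> = (if m = i then (-1)^m else 0)"
    using True choose_alternating_sum[of "m-i", where 'a='a] by auto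
  finally show ?thesis .
qed

abbreviation cm :: "complex mat \<Rightarrow> complex mat" where "cm A \<equiv> map_mat cnj A"
abbreviation cv :: "complex vec \<Rightarrow> complex vec" where "cv x \<equiv> map_vec cnj x"

lemma cm_mult: assumes "A \<in> carrier_mat n m" "B \<in> carrier_mat m k"
  shows "cm (A * B) = cm A * cm B"
  using assms by (intro eq_matI) (auto simp: scalar_prod_def cnj_sum)

lemma cv_mult: assumes "A \<in> carrier_mat n m" "x \<in> carrier_vec m"
  shows "cv (A *\<^sub>v x) = cm A *\<^sub>v cv x"
  using assms by (intro eq_vecI) (auto simp: scalar_prod_def cnj_sum)

lemma cv_add: assumes "x \<in> carrier_vec n" "y \<in> carrier_vec n"
  shows "cv (x + y) = cv x + cv y"
  using assms by (intro eq_vecI) auto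

lemma cv_minus: assumes "x \<in> carrier_vec n" "y \<in> carrier_vec n"
  shows "cv (x - y) = cv x - cv y"
  using assms by (intro eq_vecI) auto

lemma cv_cv[simp]: "cv (cv x) = x" by (intro eq_vecI) auto
lemma cm_cm[simp]: "cm (cm A) = A" by (intro eq_matI) auto
lemma cm_one[simp]: "cm (1\<^sub>m n) = 1\<^sub>m n" by (intro eq_matI) auto
lemma cv_zero[simp]: "cv (0\<^sub>v n) = 0\<^sub>v n" by (intro eq_vecI) auto

lemma aff_mult_simp[simp]: "aff_mult (A, x) (B, y) = (A * B, A *\<^sub>v y + x)"
  by (simp add: aff_mult_def)
lemma aff_cnj_simp[simp]: "aff_cnj (A, x) = (cm A, cv x)"
  by (simp add: aff_cnj_def)

lemma add_zero_neg:
  fixes a b :: "complex vec"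
  assumes "a \<in> carrier_vec n" "b \<in> carrier_vec n" "a + b = 0\<^sub>v n"
  shows "b = - a"
proof (intro eq_vecI)
  fix i assume "i < dim_vec (- a)"
  hence i: "i < n" using assms by simp
  have "(a + b) $ i = (0\<^sub>v n) $ i" by (simp only: assms(3))
  hence "b $ i + a $ i = 0" using i assms(1,2) by (simp add: add.commute)
  hence "b $ i = - (a $ i)" by (simp add: eq_neg_iff_add_eq_0)
  thus "b $ i = (- a) $ i" using i assms by simp
qed (use assms in simp)

lemma inv_unique:
  assumes A: "A \<in> carrier_mat n n" and x: "x \<in> carrier_vec n"
    and B: "B \<in> carrier_mat n n" and y: "y \<in> carrier_vec n"
    and 1: "A * B = 1\<^sub>m n" "A *\<^sub>v y + x = 0\<^sub>v n"
    and 2: "B * A = 1\<^sub>m n" "B *\<^sub>v x + y = 0\<^sub>v n"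
  shows "aff_inv n (A, x) = (B, y)"
  unfolding aff_inv_def
proof (rule the_equality)
  have iB: "invertible_mat B" using 1 2 A B unfolding invertible_mat_def inverts_mat_def
    by (auto intro!: exI[of _ A])
  show "(B, y) \<in> Aff n \<and> aff_mult (A, x) (B, y) = aff_one n \<and> aff_mult (B, y) (A, x) = aff_one n"
    using 1 2 B y iB by (simp add: Aff_def aff_one_def)
  fix k assume k: "k \<in> Aff n \<and> aff_mult (A, x) k = aff_one n \<and> aff_mult k (A, x) = aff_one n"
  obtain C z where kk: "k = (C, z)" by (cases k)
  from k kk have C: "C \<in> carrier_mat n n" and z: "z \<in> carrier_vec n" 
    and 3: "A * C = 1\<^sub>m n" "A *\<^sub>v z + x = 0\<^sub>v n" "C * A = 1\<^sub>m n" "C *\<^sub>v x + z = 0\<^sub>v n"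
    by (auto simp: Aff_def aff_one_def)
  have "C = C * (A * B)" using C 1 by simp
  also have "\<dots> = (C * A) * B" using A B C by (simp add: assoc_mult_mat)
  also have "\<dots> = B" using 3 B by simp
  finally have CB: "C = B" .
  have "z = - (C *\<^sub>v x)" by (rule add_zero_neg[OF _ z 3(4)]) (use C x in simp)
  moreover have "y = - (B *\<^sub>v x)" by (rule add_zero_neg[OF _ y 2(2)]) (use B x in simp)
  ultimately show "k = (B, y)" using kk CB by simp
qed

lemma generic:
  assumes J: "J \<in> carrier_mat n n" "cm J = J"
    and P: "P \<in> carrier_mat n n" "P * cm P = 1\<^sub>m n" "cm P * P = 1\<^sub>m n" "J * P * J = P"
    and v: "v \<in> carrier_vec n" and w: "w \<in> carrier_vec n"
    and H2: "P *\<^sub>v cv w + w = 0\<^sub>v n"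
    and HN: "J *\<^sub>v w = w - cv v - J *\<^sub>v (P *\<^sub>v v)"
  shows "strongly_c_reversible n (J, v)"
proof -
  have cP: "cm P \<in> carrier_mat n n" using P by simp
  have cw: "cv w \<in> carrier_vec n" using w by simp
  have cvv: "cv v \<in> carrier_vec n" using v by simp
  have iP: "invertible_mat P" using P cP unfolding invertible_mat_def inverts_mat_def
    by (auto intro!: exI[of _ "cm P"])
  have H2c: "cm P *\<^sub>v w + cv w = 0\<^sub>v n"
  proof -
    have "cv (P *\<^sub>v cv w + w) = cv (0\<^sub>v n)" using H2 by simp
    moreover have "cv (P *\<^sub>v cv w + w) = cv (P *\<^sub>v cv w) + cv w" by (rule cv_add) (use P w in auto)
    moreover have "cv (P *\<^sub>v cv w) = cm P *\<^sub>v w" using cv_mult[OF P(1) cw] by simp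
    ultimately show ?thesis by simp
  qed
  have JPJc: "J * cm P * J = cm P"
  proof -
    have "cm (J * P * J) = cm P" using P by simp
    moreover have "cm (J * P * J) = cm (J * P) * cm J" by (rule cm_mult) (use J P in auto)
    moreover have "cm (J * P) = cm J * cm P" by (rule cm_mult) (use J P in auto)
    ultimately show ?thesis using J by simp
  qed
  have conh: "coninvolution n (P, w)"
    using P w H2 iP by (simp add: coninvolution_def Aff_def aff_one_def)
  have invh: "aff_inv n (P, w) = (cm P, cv w)"
    by (rule inv_unique) (use P w H2 H2c in auto)
  define X where "X = P * J * cm P"
  define y where "y = (P * J) *\<^sub>v cv w + (P *\<^sub>v v + w)"
  have X: "X \<in> carrier_mat n n" unfolding X_def using P J by auto
  have y: "y \<in> carrier_vec n" unfolding y_def using P J v w by auto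
  have lhs: "aff_mult (aff_mult (P, w) (J, v)) (aff_inv n (P, w)) = (X, y)"
    unfolding invh X_def y_def by simp
  have XJ: "X * J = 1\<^sub>m n"
  proof -
    have "X * J = P * (J * cm P * J)" unfolding X_def using P J
      by (simp add: assoc_mult_mat[of _ n n _ n _ n])
    thus ?thesis using JPJc P by simp
  qed
  have JX: "J * X = 1\<^sub>m n"
  proof -
    have JPJ': "J * (P * J) = P" using P(4) assoc_mult_mat[of J n n P n J n] P J by simp
    have "J * X = J * (P * J) * cm P" unfolding X_def by (rule assoc_mult_mat[symmetric]) (use P J in auto)
    thus ?thesis using P JPJ' by simp
  qed
  have Jw: "J *\<^sub>v cv w = cv w - v - J *\<^sub>v (cm P *\<^sub>v cv v)"
  proof -
    have "cv (J *\<^sub>v w) = cv (w - cv v - J *\<^sub>v (P *\<^sub>v v))" using HN by simp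
    also have "\<dots> = cv (w - cv v) - cv (J *\<^sub>v (P *\<^sub>v v))" by (rule cv_minus[where n=n]) (use J P v w in auto)
    also have "\<dots> = cv w - v - cv (J *\<^sub>v (P *\<^sub>v v))" using cv_minus[of w n "cv v"] v w by simp
    also have "cv (J *\<^sub>v (P *\<^sub>v v)) = J *\<^sub>v (cm P *\<^sub>v cv v)"
      using cv_mult[of J n n "P *\<^sub>v v"] cv_mult[of P n n v] J P v by simp
    finally have "cv (J *\<^sub>v w) = cv w - v - J *\<^sub>v (cm P *\<^sub>v cv v)" .
    moreover have "cv (J *\<^sub>v w) = J *\<^sub>v cv w" using cv_mult[of J n n w] J w by simp
    ultimately show ?thesis by simp
  qed
  define b where "b = J *\<^sub>v (cm P *\<^sub>v cv v)"
  have b: "b \<in> carrier_vec n" unfolding b_def using J P v by auto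
  have Xv: "X *\<^sub>v cv v = P *\<^sub>v b" unfolding X_def b_def using J P v
    by (simp add: assoc_mult_mat_vec[of _ n n _ n])
  have "(P * J) *\<^sub>v cv w = P *\<^sub>v (cv w - v - b)"
    using J P w Jw by (simp add: assoc_mult_mat_vec[of _ n n _ n] b_def)
  also have "\<dots> = P *\<^sub>v cv w - P *\<^sub>v v - P *\<^sub>v b"
    using P w v b by (simp add: mult_minus_distrib_mat_vec)
  finally have PJw: "(P * J) *\<^sub>v cv w = P *\<^sub>v cv w - P *\<^sub>v v - P *\<^sub>v b" .
  have Pcw: "P *\<^sub>v cv w = - w"
  proof (intro eq_vecI)
    fix i assume "i < dim_vec (- w)"
    hence i: "i < n" using w by simp
    have "(P *\<^sub>v cv w + w) $ i = 0" using H2 i by simp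
    thus "(P *\<^sub>v cv w) $ i = (- w) $ i" using i P w by (simp add: eq_neg_iff_add_eq_0)
  qed (use P w in simp)
  have y_eq: "y = (-1) \<cdot>\<^sub>v (X *\<^sub>v cv v)"
    unfolding y_def PJw Xv Pcw
    by (intro eq_vecI) (use P w v b in auto)
  have Jy: "J *\<^sub>v y + cv v = 0\<^sub>v n"
  proof -
    have "J *\<^sub>v y = (-1) \<cdot>\<^sub>v (J *\<^sub>v (X *\<^sub>v cv v))" unfolding y_eq
      by (rule mult_mat_vec) (use J X v in auto)
    also have "J *\<^sub>v (X *\<^sub>v cv v) = (J * X) *\<^sub>v cv v"
      by (rule assoc_mult_mat_vec[symmetric]) (use J X v in auto)
    finally have "J *\<^sub>v y = (-1) \<cdot>\<^sub>v cv v" using JX v by simp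
    thus ?thesis by (intro eq_vecI) (use v in auto)
  qed
  have Xy: "X *\<^sub>v cv v + y = 0\<^sub>v n" unfolding y_eq by (intro eq_vecI) (use X v in auto)
  have cJ: "aff_cnj (J, v) = (J, cv v)" using J by simp
  have inv_eq: "aff_inv n (aff_cnj (J, v)) = (X, y)"
    unfolding cJ by (rule inv_unique[OF J(1) cvv X y JX Jy XJ Xy])
  show ?thesis unfolding strongly_c_reversible_def
  proof (intro exI[of _ "(P, w)"] conjI)
    show "coninvolution n (P, w)" by (rule conh)
    show "aff_mult (aff_mult (P, w) (J, v)) (aff_inv n (P, w)) = aff_inv n (aff_cnj (J, v))"
      by (simp only: lhs inv_eq)
  qed

qed

abbreviation JJ :: "nat \<Rightarrow> complex mat" where "JJ n \<equiv> jordan_block n 1"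

lemma Jrow: assumes "i < n" "x \<in> carrier_vec n"
  shows "row (JJ n) i \<bullet> x = x $ i + (if Suc i < n then x $ Suc i else 0)"
proof -
  have "row (JJ n) i \<bullet> x = (\<Sum>k\<in>{0..<n}. (if k = i then x $ k else 0) + (if k = Suc i then x $ k else 0))"
    unfolding scalar_prod_def using assms by (intro sum.cong) auto
  also have "\<dots> = x $ i + (if Suc i < n then x $ Suc i else 0)"
    using assms by (simp add: sum.distrib)
  finally show ?thesis .
qed

lemma Jcol: assumes "j < n" "y \<in> carrier_vec n"
  shows "y \<bullet> col (JJ n) j = y $ j + (if 0 < j then y $ (j - 1) else 0)"
proof -
  have "y \<bullet> col (JJ n) j = (\<Sum>k\<in>{0..<n}. (if k = j then y $ k else 0) + (if Suc k = j then y $ k else 0))"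
    unfolding scalar_prod_def using assms by (intro sum.cong) auto
  moreover have "(\<Sum>k\<in>{0..<n}. (if Suc k = j then y $ k else 0)) = (\<Sum>k\<in>{0..<n}. (if k = j - 1 \<and> 0 < j then y $ k else 0))"
    by (intro sum.cong) auto
  moreover have "(\<Sum>k\<in>{0..<n}. (if k = j - 1 \<and> 0 < j then y $ k else 0)) = (if 0 < j then y $ (j - 1) else 0)" using assms
    by (cases "0 < j") (auto simp: sum.delta')
  ultimately show ?thesis using assms by (simp add: sum.distrib)
qed

lemma JV: assumes "i < n" "x \<in> carrier_vec n"
  shows "(JJ n *\<^sub>v x) $ i = x $ i + (if Suc i < n then x $ Suc i else 0)"
  using assms Jrow by simp

lemma JL: assumes "i < n" "j < n" "A \<in> carrier_mat n n"
  shows "(JJ n * A) $$ (i, j) = A $$ (i, j) + (if Suc i < n then A $$ (Suc i, j) else 0)"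
  using assms Jrow[of i n "col A j"] by simp

lemma JR: assumes "i < n" "j < n" "A \<in> carrier_mat n n"
  shows "(A * JJ n) $$ (i, j) = A $$ (i, j) + (if 0 < j then A $$ (i, j - 1) else 0)"
  using assms Jcol[of j n "row A i"] by simp

definition P0 :: "nat \<Rightarrow> complex mat" where
  "P0 n = mat n n (\<lambda>(i,j). (-1)^j * of_nat (j choose i))"

lemma P0_carrier[simp]: "P0 n \<in> carrier_mat n n" by (simp add: P0_def)
lemma P0_dim[simp]: "dim_row (P0 n) = n" "dim_col (P0 n) = n" by (simp_all add: P0_def)
lemma P0_index[simp]: "i < n \<Longrightarrow> j < n \<Longrightarrow> P0 n $$ (i,j) = (-1)^j * of_nat (j choose i)"
  by (simp add: P0_def)
lemma cm_P0[simp]: "cm (P0 n) = P0 n" by (intro eq_matI) (auto simp: P0_def)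

lemma P0_sq: "P0 n * P0 n = 1\<^sub>m n"
proof (intro eq_matI)
  fix i j assume ij: "i < dim_row (1\<^sub>m n)" "j < dim_col (1\<^sub>m n)"
  hence i: "i < n" and j: "j < n" by auto
  have "(P0 n * P0 n) $$ (i,j) = (\<Sum>k\<in>{0..<n}. row (P0 n) i $ k * col (P0 n) j $ k)"
    using i j by (simp add: scalar_prod_def)
  also have "\<dots> = (\<Sum>k\<in>{0..<n}. (-1)^k * of_nat (k choose i) * ((-1)^j * of_nat (j choose k)))"
    by (rule sum.cong) (use i j in auto)
  also have "\<dots> = (\<Sum>k\<le>j. (-1)^k * of_nat (k choose i) * ((-1)^j * of_nat (j choose k)))"
    using j by (intro sum.mono_neutral_right) (auto simp: binomial_eq_0)
  also have "\<dots> = (-1)^j * (\<Sum>k\<le>j. (-1)^k * of_nat (j choose k) * of_nat (k choose i))"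
    by (simp add: sum_distrib_left algebra_simps)
  also have "\<dots> = (if j = i then 1 else 0)"
    by (simp add: alt_choose flip: power_add)
  finally show "(P0 n * P0 n) $$ (i,j) = 1\<^sub>m n $$ (i,j)" using i j by auto
qed auto

lemma P0_aux: "(if Suc i < n then (-1)^j * of_nat (j choose Suc i) else 0) +
   (if 0 < j then (-1)^(j-1) * of_nat ((j-1) choose i) + (if Suc i < n then (-1)^(j-1) * of_nat ((j-1) choose Suc i) else 0) else 0)
   = (if 0 < j \<and> n \<le> Suc i then (-1)^(j-1) * of_nat ((j-1) choose i) else (0::complex))"
proof (cases j)
  case 0
  then show ?thesis by simp
next
  case (Suc j')
  have pas: "of_nat (Suc j' choose Suc i) = (of_nat (j' choose i) + of_nat (j' choose Suc i) :: complex)"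
    by simp
  show ?thesis using Suc pas by (auto simp: algebra_simps)
qed

lemma JP0J: "JJ n * P0 n * JJ n = P0 n"
proof (intro eq_matI)
  fix i j assume ij: "i < dim_row (P0 n)" "j < dim_col (P0 n)"
  hence i: "i < n" and j: "j < n" by auto
  have JP: "JJ n * P0 n \<in> carrier_mat n n" by (rule mult_carrier_mat) auto
  have e1: "(JJ n * P0 n * JJ n) $$ (i,j) = (JJ n * P0 n) $$ (i,j) + (if 0<j then (JJ n * P0 n) $$ (i,j-1) else 0)"
    by (rule JR[OF i j JP])
  have e2: "(JJ n * P0 n) $$ (i,k) = P0 n $$ (i,k) + (if Suc i<n then P0 n $$ (Suc i,k) else 0)" if "k < n" for k
    by (rule JL) (use i that in auto)
  have "(JJ n * P0 n * JJ n) $$ (i,j) = P0 n $$ (i,j) + ((if Suc i < n then (-1)^j * of_nat (j choose Suc i) else 0) +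
   (if 0 < j then (-1)^(j-1) * of_nat ((j-1) choose i) + (if Suc i < n then (-1)^(j-1) * of_nat ((j-1) choose Suc i) else 0) else 0))"
    unfolding e1 e2[OF j] using e2[of "j-1"] i j by auto
  also have "\<dots> = P0 n $$ (i,j)" unfolding P0_aux using i j by (auto simp: binomial_eq_0)
  finally show "(JJ n * P0 n * JJ n) $$ (i,j) = P0 n $$ (i,j)" .
qed auto

lemma mat_unit: fixes A :: "complex mat" assumes "A \<in> carrier_mat n n" "i < n" "j < n"
  shows "(A *\<^sub>v unit_vec n j) $ i = A $$ (i, j)"
proof -
  have "(A *\<^sub>v unit_vec n j) $ i = (\<Sum>k\<in>{0..<n}. if k = j then A $$ (i, k) else 0)"
    using assms by (simp add: scalar_prod_def unit_vec_def if_distrib cong: if_cong)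
  also have "\<dots> = A $$ (i, j)" using assms by simp
  finally show ?thesis .
qed

definition uu :: "nat \<Rightarrow> complex vec" where
  "uu n = vec n (\<lambda>i. of_nat (n choose i) - (if i = 0 \<and> odd n then 1 else 0))"

lemma uu_carrier[simp]: "uu n \<in> carrier_vec n" by (simp add: uu_def)
lemma uu_dim[simp]: "dim_vec (uu n) = n" by (simp add: uu_def)
lemma uu_index[simp]: "i < n \<Longrightarrow> uu n $ i = of_nat (n choose i) - (if i = 0 \<and> odd n then 1 else 0)"
  by (simp add: uu_def)
lemma cv_uu[simp]: "cv (uu n) = uu n" by (intro eq_vecI) (auto simp: uu_def)

lemma F3: assumes n: "0 < n" shows "P0 n *\<^sub>v uu n = (-1)^(n-1) \<cdot>\<^sub>v uu n"
proof (intro eq_vecI)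
  fix i assume "i < dim_vec ((-1)^(n-1) \<cdot>\<^sub>v uu n)"
  hence i: "i < n" by simp
  let ?A = "\<lambda>k. (-1)^k * of_nat (n choose k) * of_nat (k choose i) :: complex"
  have "(P0 n *\<^sub>v uu n) $ i = (\<Sum>k\<in>{0..<n}. row (P0 n) i $ k * uu n $ k)"
    using i by (simp add: scalar_prod_def)
  also have "\<dots> = (\<Sum>k\<in>{0..<n}. ?A k - (if k = 0 then (if odd n \<and> i = 0 then 1 else 0) else 0))"
    by (rule sum.cong) (use i in \<open>auto simp: algebra_simps binomial_eq_0\<close>)
  also have "\<dots> = (\<Sum>k\<in>{0..<n}. ?A k) - (if odd n \<and> i = 0 then 1 else 0)"
    using n by (simp add: sum_subtractf)
  also have "(\<Sum>k\<in>{0..<n}. ?A k) = (\<Sum>k\<le>n. ?A k) - ?A n"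
    by (simp add: atLeast0LessThan flip: lessThan_Suc_atMost)
  also have "(\<Sum>k\<le>n. ?A k) = 0" using alt_choose[of n i] i by simp
  finally have "(P0 n *\<^sub>v uu n) $ i = - ((-1)^n * of_nat (n choose i)) - (if odd n \<and> i = 0 then 1 else 0)"
    by simp
  moreover have "((-1::complex)^(n-1)) = - ((-1)^n)" using n by (cases n) auto
  ultimately show "(P0 n *\<^sub>v uu n) $ i = ((-1)^(n-1) \<cdot>\<^sub>v uu n) $ i"
    using i by (auto simp: algebra_simps binomial_eq_0)
qed simp

lemma F4: assumes n: "0 < n"
  shows "JJ n *\<^sub>v uu n = uu n + (-1)^(n-1) \<cdot>\<^sub>v (JJ n *\<^sub>v (P0 n *\<^sub>v unit_vec n (n-1))) - unit_vec n (n-1)"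
proof (intro eq_vecI)
  fix i assume "i < dim_vec (uu n + (-1)^(n-1) \<cdot>\<^sub>v (JJ n *\<^sub>v (P0 n *\<^sub>v unit_vec n (n-1))) - unit_vec n (n-1))"
  hence i: "i < n" by simp
  have q: "(P0 n *\<^sub>v unit_vec n (n-1)) $ k = (-1)^(n-1) * of_nat ((n-1) choose k)" if "k < n" for k
    using mat_unit[of "P0 n" n k "n-1"] that n by simp
  have sq: "((-1::complex)^(n-1)) * (-1)^(n-1) = 1" by (simp flip: power_add)
  have qc: "P0 n *\<^sub>v unit_vec n (n-1) \<in> carrier_vec n" by (rule mult_mat_vec_carrier[OF P0_carrier]) simp
  obtain m where m: "n = Suc m" using n by (cases n) auto
  have JQ: "(JJ n *\<^sub>v (P0 n *\<^sub>v unit_vec n (n-1))) $ i = (-1)^(n-1) * (of_nat ((n-1) choose i) + (if Suc i < n then of_nat ((n-1) choose Suc i) else 0))"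
    using JV[OF i qc] q[OF i] q[of "Suc i"] i by (auto simp: algebra_simps)
  have JU: "(JJ n *\<^sub>v uu n) $ i = uu n $ i + (if Suc i < n then of_nat (n choose Suc i) else 0)"
    using JV[OF i, of "uu n"] i by simp
  show "(JJ n *\<^sub>v uu n) $ i = (uu n + (-1)^(n-1) \<cdot>\<^sub>v (JJ n *\<^sub>v (P0 n *\<^sub>v unit_vec n (n-1))) - unit_vec n (n-1)) $ i"
    unfolding JU using i JQ m sq
    by (cases "i = m") (auto simp: algebra_simps unit_vec_def)
qed simp

lemma mv_am: fixes A :: "complex mat"
  assumes "A \<in> carrier_mat n n" "x \<in> carrier_vec n" "y \<in> carrier_vec n" "z \<in> carrier_vec n"
  shows "A *\<^sub>v (x + y - z) = A *\<^sub>v x + A *\<^sub>v y - A *\<^sub>v z"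
proof -
  have "A *\<^sub>v (x + y - z) = A *\<^sub>v (x + y) - A *\<^sub>v z"
    by (rule mult_minus_distrib_mat_vec) (use assms in auto)
  also have "A *\<^sub>v (x + y) = A *\<^sub>v x + A *\<^sub>v y"
    by (rule mult_add_distrib_mat_vec) (use assms in auto)
  finally show ?thesis .
qed

lemma mv_ma: fixes A :: "complex mat"
  assumes "A \<in> carrier_mat n n" "x \<in> carrier_vec n" "y \<in> carrier_vec n" "z \<in> carrier_vec n"
  shows "A *\<^sub>v (x - y + z) = A *\<^sub>v x - A *\<^sub>v y + A *\<^sub>v z"
proof -
  have "A *\<^sub>v (x - y + z) = A *\<^sub>v (x - y) + A *\<^sub>v z"
    by (rule mult_add_distrib_mat_vec) (use assms in auto)
  also have "A *\<^sub>v (x - y) = A *\<^sub>v x - A *\<^sub>v y"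
    by (rule mult_minus_distrib_mat_vec) (use assms in auto)
  finally show ?thesis .
qed

lemma smult_mv: fixes A :: "complex mat"
  assumes "A \<in> carrier_mat n n" "x \<in> carrier_vec n"
  shows "(k \<cdot>\<^sub>m A) *\<^sub>v x = k \<cdot>\<^sub>v (A *\<^sub>v x)"
  using assms by (intro eq_vecI) (auto simp: scalar_prod_def sum_distrib_left algebra_simps)

lemma vec_lin1:
  fixes a b x y p e g :: "complex vec"
  assumes "a \<in> carrier_vec n" "b \<in> carrier_vec n" "x \<in> carrier_vec n" "y \<in> carrier_vec n"
    "p \<in> carrier_vec n" "e \<in> carrier_vec n" "g \<in> carrier_vec n"
  shows "a + (b - k \<cdot>\<^sub>v e - c \<cdot>\<^sub>v g) - (x + y - k \<cdot>\<^sub>v e) = (p + b - x) - y - (p - a + c \<cdot>\<^sub>v g)"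
  using assms by (intro eq_vecI) auto

lemma vec_lin2:
  fixes x y z :: "complex vec"
  assumes "x \<in> carrier_vec n" "y \<in> carrier_vec n" "z \<in> carrier_vec n"
  shows "(x + - y - z) + (z + y - x) = 0\<^sub>v n"
  using assms by (intro eq_vecI) auto

theorem lemma3p5:
  fixes n :: nat and v :: "complex vec"
  assumes "v \<in> carrier_vec n"
  shows "strongly_c_reversible n (jordan_block n 1, v)"
proof (cases "n = 0")
  case True
  show ?thesis
    by (rule generic[where P = "1\<^sub>m n" and w = "0\<^sub>v n"])
       (use True assms in \<open>auto intro!: eq_matI eq_vecI\<close>)
next
  case False
  hence n: "0 < n" by simp
  have vc: "v \<in> carrier_vec n" by fact
  define J where "J = JJ n"
  define c where "c = v $ (n-1)"
  define e :: "complex vec" where "e = unit_vec n (n-1)"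
  define eps where "eps = (if c = 0 then 1 else - ((-1)^(n-1)) * cnj c / c)"
  define P where "P = eps \<cdot>\<^sub>m P0 n"
  define s where "s = vec n (\<lambda>i. if i = 0 then 0 else v $ (i - 1))"
  define u where "u = uu n"
  define w' where "w' = cnj c \<cdot>\<^sub>v u"
  define w where "w = P *\<^sub>v s + w' - cv s"
  have sq: "((-1::complex)^(n-1)) * (-1)^(n-1) = 1" by (simp flip: power_add)
  have eps1: "eps * cnj eps = 1"
  proof (cases "c = 0")
    case False
    have cc: "cnj c \<noteq> 0" using False by simp
    have ce: "cnj eps = - ((-1)^(n-1)) * c / cnj c" using False by (simp add: eps_def)
    have "eps * cnj eps = ((-1)^(n-1) * (-1)^(n-1)) * ((cnj c * c) / (c * cnj c))"
      unfolding ce using False cc by (simp add: eps_def)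
    also have "\<dots> = 1" using sq False cc by simp
    finally show ?thesis .
  qed (simp add: eps_def)
  have eps1': "cnj eps * eps = 1" using eps1 by (simp add: mult.commute)
  have epsc: "c * eps = - ((-1)^(n-1)) * cnj c"
    unfolding eps_def by (cases "c = 0") auto
  have Jc: "J \<in> carrier_mat n n" unfolding J_def by simp
  have cJ: "cm J = J" unfolding J_def by (intro eq_matI) auto
  have Pc: "P \<in> carrier_mat n n" unfolding P_def by simp
  have cmP: "cm P = cnj eps \<cdot>\<^sub>m P0 n" unfolding P_def by (intro eq_matI) auto
  have sc: "s \<in> carrier_vec n" unfolding s_def by simp
  have ec: "e \<in> carrier_vec n" unfolding e_def by simp
  have uc: "u \<in> carrier_vec n" unfolding u_def by simp
  have w'c: "w' \<in> carrier_vec n" unfolding w'_def using uc by simp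
  have wc: "w \<in> carrier_vec n" unfolding w_def using Pc sc w'c by simp
  have PP: "P * cm P = 1\<^sub>m n"
  proof -
    have "P * cm P = cnj eps \<cdot>\<^sub>m (eps \<cdot>\<^sub>m (P0 n * P0 n))" unfolding cmP unfolding P_def
      by (simp add: mult_smult_assoc_mat[of _ n n _ n] mult_smult_distrib[of _ n n _ n])
    thus ?thesis using eps1 eps1' by (simp add: P0_sq) (intro eq_matI, auto)
  qed
  have PP': "cm P * P = 1\<^sub>m n"
  proof -
    have "cm P * P = eps \<cdot>\<^sub>m (cnj eps \<cdot>\<^sub>m (P0 n * P0 n))" unfolding cmP unfolding P_def
      by (simp add: mult_smult_assoc_mat[of _ n n _ n] mult_smult_distrib[of _ n n _ n])
    thus ?thesis using eps1 eps1' by (simp add: P0_sq) (intro eq_matI, auto)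
  qed
  have JPJ: "J * P * J = P"
  proof -
    have JP0c: "J * P0 n \<in> carrier_mat n n" by (rule mult_carrier_mat[OF Jc P0_carrier])
    have "J * P = eps \<cdot>\<^sub>m (J * P0 n)" unfolding P_def by (rule mult_smult_distrib[OF Jc P0_carrier])
    moreover have "(eps \<cdot>\<^sub>m (J * P0 n)) * J = eps \<cdot>\<^sub>m (J * P0 n * J)"
      by (rule mult_smult_assoc_mat[OF JP0c Jc])
    ultimately have "J * P * J = eps \<cdot>\<^sub>m (J * P0 n * J)" by simp
    thus ?thesis unfolding J_def P_def by (simp add: JP0J)
  qed
  have Pv: "P *\<^sub>v x = eps \<cdot>\<^sub>v (P0 n *\<^sub>v x)" if "x \<in> carrier_vec n" for x
    unfolding P_def by (rule smult_mv) (use that in auto)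
  have R2: "P *\<^sub>v cv w' + w' = 0\<^sub>v n"
  proof -
    have "cv w' = c \<cdot>\<^sub>v u" unfolding w'_def u_def by (intro eq_vecI) auto
    hence "P *\<^sub>v cv w' = eps \<cdot>\<^sub>v (c \<cdot>\<^sub>v (P0 n *\<^sub>v u))"
      using Pv[of "c \<cdot>\<^sub>v u"] uc mult_mat_vec[OF P0_carrier uc] by simp
    also have "\<dots> = eps \<cdot>\<^sub>v (c \<cdot>\<^sub>v ((-1)^(n-1) \<cdot>\<^sub>v u))" unfolding u_def using F3[OF n] by simp
    finally have "P *\<^sub>v cv w' = eps \<cdot>\<^sub>v (c \<cdot>\<^sub>v ((-1)^(n-1) \<cdot>\<^sub>v u))" .
    moreover have key: "eps * (c * ((-1)^(n-1) * x)) = - (cnj c * x)" for x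
    proof -
      have "eps * (c * ((-1)^(n-1) * x)) = (c * eps) * ((-1)^(n-1)) * x" by (simp add: algebra_simps)
      also have "\<dots> = - ((-1)^(n-1) * (-1)^(n-1)) * cnj c * x" unfolding epsc by (simp add: algebra_simps)
      also have "\<dots> = - (cnj c * x)" using sq by simp
      finally show ?thesis .
    qed
    ultimately show ?thesis unfolding w'_def using uc
      by (intro eq_vecI) (auto simp: key)
  qed
  have R3: "J *\<^sub>v w' = w' - cnj c \<cdot>\<^sub>v e - c \<cdot>\<^sub>v (J *\<^sub>v (P *\<^sub>v e))"
  proof -
    have qc: "P0 n *\<^sub>v e \<in> carrier_vec n" by (rule mult_mat_vec_carrier[OF P0_carrier ec])
    have a: "J *\<^sub>v w' = cnj c \<cdot>\<^sub>v (J *\<^sub>v u)" unfolding w'_def by (rule mult_mat_vec[OF Jc uc])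
    have b: "J *\<^sub>v (P *\<^sub>v e) = eps \<cdot>\<^sub>v (J *\<^sub>v (P0 n *\<^sub>v e))" unfolding Pv[OF ec] by (rule mult_mat_vec[OF Jc qc])
    have F: "J *\<^sub>v u = u + (-1)^(n-1) \<cdot>\<^sub>v (J *\<^sub>v (P0 n *\<^sub>v e)) - e"
      unfolding J_def u_def e_def by (rule F4[OF n])
    have ce: "c * eps = - ((-1)^(n-1)) * cnj c" by (rule epsc)
    define q where "q = J *\<^sub>v (P0 n *\<^sub>v e)"
    have qqc: "q \<in> carrier_vec n" unfolding q_def using Jc qc by simp
    show ?thesis
    proof (intro eq_vecI)
      fix i assume "i < dim_vec (w' - cnj c \<cdot>\<^sub>v e - c \<cdot>\<^sub>v (J *\<^sub>v (P *\<^sub>v e)))"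
      hence i: "i < n" using w'c Jc by simp
      have L: "(J *\<^sub>v w') $ i = cnj c * (u $ i + (-1)^(n-1) * q $ i - e $ i)"
        unfolding a F q_def[symmetric] using i uc ec qqc by simp
      have R: "(w' - cnj c \<cdot>\<^sub>v e - c \<cdot>\<^sub>v (J *\<^sub>v (P *\<^sub>v e))) $ i = cnj c * u $ i - cnj c * e $ i - c * (eps * q $ i)"
        unfolding b q_def[symmetric] w'_def using i uc ec qqc by simp
      have K: "c * (eps * q $ i) = - (cnj c * (-1)^(n-1)) * q $ i"
      proof -
        have "c * (eps * q $ i) = (c * eps) * q $ i" by (rule mult.assoc[symmetric])
        also have "\<dots> = - ((-1)^(n-1)) * cnj c * q $ i" unfolding ce ..
        also have "\<dots> = - (cnj c * (-1)^(n-1)) * q $ i" by (simp add: algebra_simps)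
        finally show ?thesis .
      qed
      show "(J *\<^sub>v w') $ i = (w' - cnj c \<cdot>\<^sub>v e - c \<cdot>\<^sub>v (J *\<^sub>v (P *\<^sub>v e))) $ i"
        unfolding L R K by (simp add: algebra_simps)
    qed (use Jc w'c in simp)
  qed
  have S1: "v = J *\<^sub>v s - s + c \<cdot>\<^sub>v e"
  proof (intro eq_vecI)
    fix i assume "i < dim_vec (J *\<^sub>v s - s + c \<cdot>\<^sub>v e)"
    hence i: "i < n" using Jc ec sc by simp
    show "v $ i = (J *\<^sub>v s - s + c \<cdot>\<^sub>v e) $ i"
      using i JV[OF i sc] vc Jc sc unfolding J_def c_def e_def
      by (cases "Suc i < n") (auto simp: s_def unit_vec_def)
  qed (use vc Jc ec sc in simp)
  have S2: "J *\<^sub>v cv s = cv s + cv v - cnj c \<cdot>\<^sub>v e"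
  proof (intro eq_vecI)
    fix i assume "i < dim_vec (cv s + cv v - cnj c \<cdot>\<^sub>v e)"
    hence i: "i < n" using sc ec by simp
    have csc: "cv s \<in> carrier_vec n" using sc by simp
    show "(J *\<^sub>v cv s) $ i = (cv s + cv v - cnj c \<cdot>\<^sub>v e) $ i"
      using i JV[OF i csc] vc Jc sc unfolding J_def c_def e_def
      by (cases "Suc i < n") (auto simp: s_def unit_vec_def)
  qed (use Jc sc ec in simp)
  have cPc: "cm P \<in> carrier_mat n n" using Pc by simp
  have csc: "cv s \<in> carrier_vec n" using sc by simp
  have cvc: "cv v \<in> carrier_vec n" using vc by simp
  have cw'c: "cv w' \<in> carrier_vec n" using w'c by simp
  have Psc: "P *\<^sub>v s \<in> carrier_vec n" using Pc sc by simp
  have cw: "cv w = cm P *\<^sub>v cv s + cv w' - s"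
  proof -
    have "cv w = cv (P *\<^sub>v s + w') - cv (cv s)" unfolding w_def
      by (rule cv_minus[where n=n]) (use Psc w'c sc in auto)
    also have "cv (P *\<^sub>v s + w') = cv (P *\<^sub>v s) + cv w'"
      by (rule cv_add[where n=n]) (use Psc w'c in auto)
    also have "cv (P *\<^sub>v s) = cm P *\<^sub>v cv s" by (rule cv_mult[OF Pc sc])
    finally show ?thesis by simp
  qed
  have H2: "P *\<^sub>v cv w + w = 0\<^sub>v n"
  proof -
    have "P *\<^sub>v cv w = P *\<^sub>v (cm P *\<^sub>v cv s) + P *\<^sub>v cv w' - P *\<^sub>v s"
      unfolding cw by (rule mv_am[OF Pc]) (use cPc csc cw'c sc in auto)
    also have "P *\<^sub>v (cm P *\<^sub>v cv s) = cv s"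
      using assoc_mult_mat_vec[OF Pc cPc csc, symmetric] PP csc by simp
    finally have a: "P *\<^sub>v cv w = cv s + P *\<^sub>v cv w' - P *\<^sub>v s" .
    have b: "P *\<^sub>v cv w' = - w'"
    proof (intro eq_vecI)
      fix i assume "i < dim_vec (- w')"
      hence i: "i < n" using w'c by simp
      have "(P *\<^sub>v cv w' + w') $ i = 0" using R2 i by simp
      thus "(P *\<^sub>v cv w') $ i = (- w') $ i" using i Pc w'c by (simp add: eq_neg_iff_add_eq_0)
    qed (use Pc w'c in simp)
    show ?thesis unfolding a b unfolding w_def
      by (rule vec_lin2[OF csc w'c Psc])
  qed
  have HN: "J *\<^sub>v w = w - cv v - J *\<^sub>v (P *\<^sub>v v)"
  proof -
    have Jw: "J *\<^sub>v w = J *\<^sub>v (P *\<^sub>v s) + J *\<^sub>v w' - J *\<^sub>v cv s"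
      unfolding w_def by (rule mv_am[OF Jc]) (use Psc w'c csc in auto)
    have Pvv: "P *\<^sub>v v = P *\<^sub>v (J *\<^sub>v s) - P *\<^sub>v s + P *\<^sub>v (c \<cdot>\<^sub>v e)"
      by (subst S1, rule mv_ma[OF Pc]) (use Jc sc ec in auto)
    have JPvv: "J *\<^sub>v (P *\<^sub>v v) = J *\<^sub>v (P *\<^sub>v (J *\<^sub>v s)) - J *\<^sub>v (P *\<^sub>v s) + J *\<^sub>v (P *\<^sub>v (c \<cdot>\<^sub>v e))"
      unfolding Pvv by (rule mv_ma[OF Jc]) (use Pc Jc sc ec in auto)
    have t1: "J *\<^sub>v (P *\<^sub>v (J *\<^sub>v s)) = P *\<^sub>v s"
    proof -
      have "J *\<^sub>v (P *\<^sub>v (J *\<^sub>v s)) = (J * P) *\<^sub>v (J *\<^sub>v s)"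
        by (rule assoc_mult_mat_vec[symmetric]) (use Jc Pc sc in auto)
      also have "\<dots> = (J * P * J) *\<^sub>v s"
        by (rule assoc_mult_mat_vec[symmetric]) (use Jc Pc sc in auto)
      finally show ?thesis using JPJ by simp
    qed
    have t2: "J *\<^sub>v (P *\<^sub>v (c \<cdot>\<^sub>v e)) = c \<cdot>\<^sub>v (J *\<^sub>v (P *\<^sub>v e))"
      using mult_mat_vec[OF Pc ec, of c] mult_mat_vec[OF Jc, of "P *\<^sub>v e" c] Pc ec by simp
    have JPec: "J *\<^sub>v (P *\<^sub>v e) \<in> carrier_vec n" using Jc Pc ec by simp
    have JPsc: "J *\<^sub>v (P *\<^sub>v s) \<in> carrier_vec n" using Jc Pc sc by simp
    show ?thesis unfolding Jw JPvv t1 t2 R3 S2 unfolding w_def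
      by (rule vec_lin1[OF JPsc w'c csc cvc Psc ec JPec])
  qed
  show ?thesis unfolding J_def[symmetric]
    by (rule generic[OF Jc cJ Pc PP PP' JPJ vc wc H2 HN])
qed
end
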